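(* Let $(S,\cdot)$ be a discrete semigroup and let $\mathcal{F}$ be a filter on $S$ such that $\overline{\mathcal{F}}=\bigcap_{F\in\mathcal{F}}\overline{F}\subseteq\beta S$ is a (closed) subsemigroup of $\beta S$. Let $B\subseteq S$. Then $B$ is $\mathcal{F}$-central if and only if there exist a dynamical system $(X,\langle T_s\rangle_{s\in S})$, points $x,y\in X$ and a neighbourhood $U$ of $y$ such that $x$ and $y$ are $\mathcal{F}$-proximal, $y$ is $\mathcal{F}$-uniformly recurrent, and $B=\{s\in S: T_s(x)\in U\}$.
   Context: $\beta S$ is the Stone–Čech compactification of the discrete semigroup $S$ (the space of ultrafilters on $S$), with the operation extended so that $(\beta S,\cdot)$ is a compact right topological semigroup; $A\in p\cdot q$ iff $\{x\in S: x^{-1}A\in q\}\in p$, where $x^{-1}A=\{y\in S: xy\in A\}$. For a filter $\mathcal{F}$ on $S$, $\overline{\mathcal{F}}=\bigcap_{F\in\mathcal{F}}\overline{F}$ is the set of ultrafilters containing $\mathcal{F}$. For a compact Hausdorff right topological semigroup $T$, $K(T)$ denotes its smallest two-sided ideal. A set $C\subseteq S$ is $\mathcal{F}$-central if there is an idempotent $p\in K(\overline{\mathcal{F}})$ with $C\in p$. A dynamical system $(X,\langle T_s\rangle_{s\in S})$ consists of a compact (Hausdorff) space $X$ and continuous maps $T_s:X\to X$ with $T_s\circ T_t=T_{st}$ for all $s,t\in S$. A set $A\subseteq S$ is $\mathcal{F}$-syndetic if for every $F\in\mathcal{F}$ there is a finite $G\subseteq F$ with $G^{-1}A=\bigcup_{t\in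 G}t^{-1}A\in\mathcal{F}$. A point $x\in X$ is $\mathcal{F}$-uniformly recurrent if for every neighbourhood $U$ of $x$, $\{s\in S: T_s(x)\in U\}$ is $\mathcal{F}$-syndetic. Points $x,y\in X$ are $\mathcal{F}$-proximal if for every neighbourhood $U$ of the diagonal in $X\times X$ and every $F\in\mathcal{F}$ there is $s\in F$ with $(T_s(x),T_s(y))\in U$. *)

theory Defs
  imports "HOL-Analysis.Analysis"
begin

text \<open>The discrete semigroup S is the whole type 's (class semigroup_mult).
  Ultrafilters (points of beta S) are represented as sets of subsets of S.\<close>

definition is_ultrafilter :: "'s set set \<Rightarrow> bool" where
  "is_ultrafilter p \<longleftrightarrow> UNIV \<in> p \<and> {} \<notin> p
     \<and> (\<forall>A B. A \<in> p \<and> B \<in> p \<longrightarrow> A \<inter> B \<in> p)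
     \<and> (\<forall>A B. A \<in> p \<and> A \<subseteq> B \<longrightarrow> B \<in> p)
     \<and> (\<forall>A. A \<in> p \<or> - A \<in> p)"

definition betaS :: "'s set set set" where
  "betaS = {p. is_ultrafilter p}"

definition is_filter_on :: "'s set set \<Rightarrow> bool" where
  "is_filter_on F \<longleftrightarrow> UNIV \<in> F \<and> {} \<notin> F
     \<and> (\<forall>A B. A \<in> F \<and> B \<in> F \<longrightarrow> A \<inter> B \<in> F)
     \<and> (\<forall>A B. A \<in> F \<and> A \<subseteq> B \<longrightarrow> B \<in> F)"

text \<open>Closure of F in beta S: the ultrafilters containing F.\<close>
definition Fbar :: "'s set set \<Rightarrow> 's set set set" where
  "Fbar F = {p \<in> betaS. F \<subseteq> p}"

definition umult :: "'s::semigroup_mult set set \<Rightarrow> 's set set \<Rightarrow> 's set set" where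
  "umult p q = {A. {x. {y. x * y \<in> A} \<in> q} \<in> p}"

definition subsemigroup_beta :: "'s::semigroup_mult set set set \<Rightarrow> bool" where
  "subsemigroup_beta T \<longleftrightarrow> T \<subseteq> betaS \<and> (\<forall>p\<in>T. \<forall>q\<in>T. umult p q \<in> T)"

definition ideal_beta :: "'s::semigroup_mult set set set \<Rightarrow> 's set set set \<Rightarrow> bool" where
  "ideal_beta T I \<longleftrightarrow> I \<noteq> {} \<and> I \<subseteq> T
     \<and> (\<forall>p\<in>T. \<forall>q\<in>I. umult p q \<in> I \<and> umult q p \<in> I)"

definition K_beta :: "'s::semigroup_mult set set set \<Rightarrow> 's set set set" where
  "K_beta T = \<Inter> {I. ideal_beta T I}"

definition F_central :: "'s::semigroup_mult set set \<Rightarrow> 's set \<Rightarrow> bool" where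
  "F_central F C \<longleftrightarrow> (\<exists>p \<in> K_beta (Fbar F). umult p p = p \<and> C \<in> p)"

definition dyn_system :: "'x topology \<Rightarrow> ('s::semigroup_mult \<Rightarrow> 'x \<Rightarrow> 'x) \<Rightarrow> bool" where
  "dyn_system X T \<longleftrightarrow> compact_space X \<and> Hausdorff_space X
     \<and> (\<forall>s. continuous_map X X (T s))
     \<and> (\<forall>s t. \<forall>x \<in> topspace X. T s (T t x) = T (s * t) x)"

definition nbhd :: "'x topology \<Rightarrow> 'x set \<Rightarrow> 'x set \<Rightarrow> bool" where
  "nbhd X U A \<longleftrightarrow> U \<subseteq> topspace X \<and> (\<exists>V. openin X V \<and> A \<subseteq> V \<and> V \<subseteq> U)"

definition F_syndetic :: "'s::semigroup_mult set set \<Rightarrow> 's set \<Rightarrow> bool" where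
  "F_syndetic F A \<longleftrightarrow> (\<forall>G \<in> F. \<exists>H. finite H \<and> H \<subseteq> G \<and> (\<Union>t\<in>H. {y. t * y \<in> A}) \<in> F)"

definition F_unif_rec :: "'s::semigroup_mult set set \<Rightarrow> 'x topology \<Rightarrow> ('s \<Rightarrow> 'x \<Rightarrow> 'x) \<Rightarrow> 'x \<Rightarrow> bool" where
  "F_unif_rec F X T x \<longleftrightarrow> (\<forall>U. nbhd X U {x} \<longrightarrow> F_syndetic F {s. T s x \<in> U})"

definition F_proximal :: "'s::semigroup_mult set set \<Rightarrow> 'x topology \<Rightarrow> ('s \<Rightarrow> 'x \<Rightarrow> 'x) \<Rightarrow> 'x \<Rightarrow> 'x \<Rightarrow> bool" where
  "F_proximal F X T x y \<longleftrightarrow>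
     (\<forall>W. nbhd (prod_topology X X) W {(z, z) | z. z \<in> topspace X} \<longrightarrow>
        (\<forall>G \<in> F. \<exists>s \<in> G. (T s x, T s y) \<in> W))"

end

theory Submission
  imports Defs
begin

section \<open>Ultrafilters\<close>

lemma uf_UNIV: "is_ultrafilter p \<Longrightarrow> UNIV \<in> p" by (simp add: is_ultrafilter_def)
lemma uf_empty: "is_ultrafilter p \<Longrightarrow> {} \<notin> p" by (simp add: is_ultrafilter_def)
lemma uf_Int: "is_ultrafilter p \<Longrightarrow> A \<in> p \<Longrightarrow> B \<in> p \<Longrightarrow> A \<inter> B \<in> p"
  by (simp add: is_ultrafilter_def)
lemma uf_mono: "is_ultrafilter p \<Longrightarrow> A \<in> p \<Longrightarrow> A \<subseteq> B \<Longrightarrow> B \<in> p"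
  unfolding is_ultrafilter_def by blast
lemma uf_compl: "is_ultrafilter p \<Longrightarrow> A \<notin> p \<Longrightarrow> - A \<in> p"
  unfolding is_ultrafilter_def by blast
lemma uf_compl_iff: "is_ultrafilter p \<Longrightarrow> - A \<in> p \<longleftrightarrow> A \<notin> p"
proof
  assume u: "is_ultrafilter p" and "- A \<in> p"
  show "A \<notin> p"
  proof
    assume "A \<in> p"
    then have "A \<inter> - A \<in> p" using uf_Int[OF u] \<open>- A \<in> p\<close> by blast
    then show False using uf_empty[OF u] by simp
  qed
qed (rule uf_compl)

lemma uf_disj: "is_ultrafilter p \<Longrightarrow> A \<in> p \<Longrightarrow> B \<in> p \<Longrightarrow> A \<inter> B = {} \<Longrightarrow> False"
  using uf_Int uf_empty by metis

lemma uf_Un: "is_ultrafilter p \<Longrightarrow> A \<union> B \<in> p \<Longrightarrow> A \<in> p \<or> B \<in> p"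
proof (rule ccontr)
  assume u: "is_ultrafilter p" and ab: "A \<union> B \<in> p" and n: "\<not> (A \<in> p \<or> B \<in> p)"
  then have "- A \<in> p" "- B \<in> p" using uf_compl by blast+
  then have "- A \<inter> - B \<in> p" using uf_Int[OF u] by blast
  then show False using uf_disj[OF u ab] by blast
qed

lemma uf_finite_Un:
  assumes u: "is_ultrafilter p" and fin: "finite H"
  shows "(\<Union>t\<in>H. f t) \<in> p \<Longrightarrow> \<exists>t\<in>H. f t \<in> p"
  using fin
proof (induction H rule: finite_induct)
  case empty then show ?case using uf_empty[OF u] by simp
next
  case (insert x H)
  then have "f x \<union> (\<Union>t\<in>H. f t) \<in> p" by simp
  then show ?case using uf_Un[OF u] insert by blast
qed

lemma uf_principal: "is_ultrafilter {A. a \<in> A}"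
  unfolding is_ultrafilter_def by auto

lemma filt_UNIV: "is_filter_on q \<Longrightarrow> UNIV \<in> q" by (simp add: is_filter_on_def)
lemma filt_empty: "is_filter_on q \<Longrightarrow> {} \<notin> q" by (simp add: is_filter_on_def)
lemma filt_Int: "is_filter_on q \<Longrightarrow> A \<in> q \<Longrightarrow> B \<in> q \<Longrightarrow> A \<inter> B \<in> q"
  by (simp add: is_filter_on_def)
lemma filt_mono: "is_filter_on q \<Longrightarrow> A \<in> q \<Longrightarrow> A \<subseteq> B \<Longrightarrow> B \<in> q"
  unfolding is_filter_on_def by blast
lemma filt_I:
  assumes "UNIV \<in> q" "{} \<notin> q" "\<And>A B. A \<in> q \<Longrightarrow> B \<in> q \<Longrightarrow> A \<inter> B \<in> q"
    "\<And>A B. A \<in> q \<Longrightarrow> A \<subseteq> B \<Longrightarrow> B \<in> q"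
  shows "is_filter_on q"
  using assms unfolding is_filter_on_def by blast

lemma uf_extend:
  assumes cl: "\<forall>A\<in>G. \<forall>B\<in>G. \<exists>C\<in>G. C \<subseteq> A \<inter> B" and ne: "{} \<notin> G"
  shows "\<exists>p. is_ultrafilter p \<and> G \<subseteq> p"
proof -
  define AA where "AA = {q :: 'a set set. is_filter_on q \<and> G \<subseteq> q}"
  define f0 where "f0 = {B :: 'a set. B = UNIV \<or> (\<exists>C\<in>G. C \<subseteq> B)}"
  have "is_filter_on f0"
  proof (rule filt_I)
    show "UNIV \<in> f0" unfolding f0_def by simp
    show "{} \<notin> f0" unfolding f0_def using ne by auto
  next
    fix A B assume "A \<in> f0" "B \<in> f0"
    then show "A \<inter> B \<in> f0" unfolding f0_def
    proof (elim CollectE disjE bexE)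
      fix C D assume "C \<in> G" "C \<subseteq> A" "D \<in> G" "D \<subseteq> B"
      then obtain E where "E \<in> G" "E \<subseteq> C \<inter> D" using cl by blast
      then show "A \<inter> B \<in> {B. B = UNIV \<or> (\<exists>C\<in>G. C \<subseteq> B)}"
        using \<open>C \<subseteq> A\<close> \<open>D \<subseteq> B\<close> by blast
    qed auto
  next
    fix A B assume "A \<in> f0" "A \<subseteq> B" then show "B \<in> f0" unfolding f0_def by auto
  qed
  moreover have "G \<subseteq> f0" unfolding f0_def by auto
  ultimately have f0: "f0 \<in> AA" unfolding AA_def by simp
  have "\<exists>M\<in>AA. \<forall>X\<in>AA. M \<subseteq> X \<longrightarrow> X = M"
  proof (rule subset_Zorn)
    fix C assume ch: "subset.chain AA C"
    then have CA: "C \<subseteq> AA" and tot: "\<And>X Y. X \<in> C \<Longrightarrow> Y \<in> C \<Longrightarrow> X \<subseteq> Y \<or> Y \<subseteq> X"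
      unfolding subset.chain_def by auto
    have fC: "\<And>X. X \<in> C \<Longrightarrow> is_filter_on X" and gC: "\<And>X. X \<in> C \<Longrightarrow> G \<subseteq> X"
      using CA unfolding AA_def by auto
    show "\<exists>U\<in>AA. \<forall>X\<in>C. X \<subseteq> U"
    proof (cases "C = {}")
      case True then show ?thesis using f0 by blast
    next
      case False
      then obtain X0 where X0: "X0 \<in> C" by blast
      have "is_filter_on (\<Union>C)"
      proof (rule filt_I)
        show "UNIV \<in> \<Union>C" using X0 fC filt_UNIV by blast
        show "{} \<notin> \<Union>C" using fC filt_empty by blast
      next
        fix A B assume "A \<in> \<Union>C" "B \<in> \<Union>C"
        then obtain X Y where XY: "X \<in> C" "Y \<in> C" "A \<in> X" "B \<in> Y" by blast
        from tot[OF XY(1,2)] show "A \<inter> B \<in> \<Union>C"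
        proof
          assume "X \<subseteq> Y"
          then have "A \<inter> B \<in> Y" using filt_Int[OF fC[OF XY(2)]] XY by blast
          then show ?thesis using XY by blast
        next
          assume "Y \<subseteq> X"
          then have "A \<inter> B \<in> X" using filt_Int[OF fC[OF XY(1)]] XY by blast
          then show ?thesis using XY by blast
        qed
      next
        fix A B assume "A \<in> \<Union>C" "A \<subseteq> B"
        then show "B \<in> \<Union>C" using fC filt_mono by blast
      qed
      moreover have "G \<subseteq> \<Union>C" using X0 gC by blast
      ultimately have "\<Union>C \<in> AA" unfolding AA_def by simp
      then show ?thesis by blast
    qed
  qed
  then obtain M where M: "M \<in> AA" and max: "\<forall>X\<in>AA. M \<subseteq> X \<longrightarrow> X = M" by blast
  have fM: "is_filter_on M" and GM: "G \<subseteq> M" using M unfolding AA_def by auto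
  have "\<forall>A. A \<in> M \<or> - A \<in> M"
  proof (intro allI)
    fix A
    show "A \<in> M \<or> - A \<in> M"
    proof (cases "\<exists>C\<in>M. C \<inter> A = {}")
      case True
      then obtain C where "C \<in> M" "C \<subseteq> - A" by blast
      then show ?thesis using filt_mono[OF fM] by blast
    next
      case False
      define M1 where "M1 = {B. \<exists>C\<in>M. C \<inter> A \<subseteq> B}"
      have "is_filter_on M1"
      proof (rule filt_I)
        show "UNIV \<in> M1" using filt_UNIV[OF fM] unfolding M1_def by blast
        show "{} \<notin> M1" using False unfolding M1_def by blast
      next
        fix X Y assume "X \<in> M1" "Y \<in> M1"
        then obtain C1 C2 where "C1 \<in> M" "C2 \<in> M" "C1 \<inter> A \<subseteq> X" "C2 \<inter> A \<subseteq> Y"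
          unfolding M1_def by blast
        moreover then have "C1 \<inter> C2 \<in> M" using filt_Int[OF fM] by blast
        ultimately show "X \<inter> Y \<in> M1" unfolding M1_def by blast
      next
        fix X Y assume "X \<in> M1" "X \<subseteq> Y"
        then show "Y \<in> M1" unfolding M1_def by blast
      qed
      moreover have "M \<subseteq> M1" unfolding M1_def by blast
      moreover have "G \<subseteq> M1" using GM \<open>M \<subseteq> M1\<close> by blast
      ultimately have "M1 = M" using max unfolding AA_def by blast
      moreover have "A \<in> M1" unfolding M1_def using filt_UNIV[OF fM] by blast
      ultimately show ?thesis by blast
    qed
  qed
  then have "is_ultrafilter M" using fM unfolding is_ultrafilter_def is_filter_on_def by blast
  then show ?thesis using GM by blast
qed

section \<open>Multiplication on ultrafilters\<close>

lemma umult_assoc: "umult (umult p q) r = umult p (umult (q::'s::semigroup_mult set set) r)"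
  unfolding umult_def by (simp add: mult.assoc)

lemma umult_uf:
  assumes p: "is_ultrafilter p" and q: "is_ultrafilter q"
  shows "is_ultrafilter (umult p (q::'s::semigroup_mult set set))"
  unfolding is_ultrafilter_def umult_def
proof (intro conjI allI impI)
  show "UNIV \<in> {A. {x. {y. x * y \<in> A} \<in> q} \<in> p}" using uf_UNIV[OF p] uf_UNIV[OF q] by simp
  show "{} \<notin> {A. {x. {y. x * y \<in> A} \<in> q} \<in> p}" using uf_empty[OF p] uf_empty[OF q] by simp
next
  fix A B assume "A \<in> {A. {x. {y. x * y \<in> A} \<in> q} \<in> p} \<and> B \<in> {A. {x. {y. x * y \<in> A} \<in> q} \<in> p}"
  then have "{x. {y. x * y \<in> A} \<in> q} \<inter> {x. {y. x * y \<in> B} \<in> q} \<in> p" using uf_Int[OF p] by simp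
  moreover have "{x. {y. x * y \<in> A} \<in> q} \<inter> {x. {y. x * y \<in> B} \<in> q} \<subseteq> {x. {y. x * y \<in> A \<inter> B} \<in> q}"
  proof
    fix x assume "x \<in> {x. {y. x * y \<in> A} \<in> q} \<inter> {x. {y. x * y \<in> B} \<in> q}"
    then have "{y. x * y \<in> A} \<inter> {y. x * y \<in> B} \<in> q" using uf_Int[OF q] by simp
    moreover have "{y. x * y \<in> A} \<inter> {y. x * y \<in> B} = {y. x * y \<in> A \<inter> B}" by auto
    ultimately show "x \<in> {x. {y. x * y \<in> A \<inter> B} \<in> q}" by simp
  qed
  ultimately show "A \<inter> B \<in> {A. {x. {y. x * y \<in> A} \<in> q} \<in> p}" using uf_mono[OF p] by blast
next
  fix A B assume "A \<in> {A. {x. {y. x * y \<in> A} \<in> q} \<in> p} \<and> A \<subseteq> B"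
  moreover have "A \<subseteq> B \<Longrightarrow> {x. {y. x * y \<in> A} \<in> q} \<subseteq> {x. {y. x * y \<in> B} \<in> q}"
    using uf_mono[OF q] by (smt (verit, best) Collect_mono_iff subset_eq)
  ultimately show "B \<in> {A. {x. {y. x * y \<in> A} \<in> q} \<in> p}" using uf_mono[OF p] by blast
next
  fix A
  have "{x. {y. x * y \<in> - A} \<in> q} = - {x. {y. x * y \<in> A} \<in> q}"
  proof -
    have "\<And>x. {y. x * y \<in> - A} = - {y. x * y \<in> A}" by auto
    then show ?thesis using uf_compl_iff[OF q] by auto
  qed
  then show "A \<in> {A. {x. {y. x * y \<in> A} \<in> q} \<in> p} \<or> - A \<in> {A. {x. {y. x * y \<in> A} \<in> q} \<in> p}"
    using uf_compl[OF p] by auto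
qed

section \<open>The product topology on families of sets\<close>

definition QQ :: "('a set \<Rightarrow> bool) topology" where
  "QQ = product_topology (\<lambda>_. discrete_topology UNIV) UNIV"

definition PP :: "'a set set topology" where
  "PP = pullback_topology UNIV (\<lambda>\<A> A. A \<in> \<A>) QQ"

lemma topspace_QQ [simp]: "topspace QQ = UNIV"
  unfolding QQ_def by simp

lemma topspace_PP [simp]: "topspace PP = UNIV"
  unfolding PP_def by (simp add: topspace_pullback_topology)

lemma coord_cont: "continuous_map PP (discrete_topology UNIV) (\<lambda>\<A>. A \<in> \<A>)"
proof -
  have "continuous_map QQ (discrete_topology UNIV) (\<lambda>f. f A)"
    unfolding QQ_def by (rule continuous_map_product_projection) simp
  then have "continuous_map PP (discrete_topology UNIV) ((\<lambda>f. f A) \<circ> (\<lambda>\<A> A. A \<in> \<A>))"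
    unfolding PP_def by (rule continuous_map_pullback)
  then show ?thesis by (simp add: o_def)
qed

lemma into_PP:
  assumes "\<And>A. continuous_map Y (discrete_topology UNIV) (\<lambda>y. A \<in> g y)"
  shows "continuous_map Y PP g"
  unfolding PP_def
proof (rule continuous_map_pullback')
  show "continuous_map Y QQ ((\<lambda>\<A> A. A \<in> \<A>) \<circ> g)"
    unfolding QQ_def continuous_map_componentwise_UNIV using assms by (simp add: o_def)
qed simp

lemma PP_homeo: "(PP :: 'a set set topology) homeomorphic_space (QQ :: ('a set \<Rightarrow> bool) topology)"
proof -
  have "homeomorphic_maps (PP :: 'a set set topology) QQ (\<lambda>\<A> A. A \<in> \<A>) (\<lambda>f. {A :: 'a set. f A})"
    unfolding homeomorphic_maps_def
  proof (intro conjI)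
    show "continuous_map PP QQ (\<lambda>\<A> A. A \<in> \<A>)"
      unfolding QQ_def continuous_map_componentwise_UNIV using coord_cont by (auto simp: o_def)
    show "continuous_map QQ PP (\<lambda>f. {A. f A})"
    proof (rule into_PP)
      fix A show "continuous_map QQ (discrete_topology UNIV) (\<lambda>y. A \<in> {A. y A})"
        unfolding QQ_def by simp (rule continuous_map_product_projection, simp)
    qed
  qed auto
  then show ?thesis unfolding homeomorphic_space_def by blast
qed

lemma compact_PP: "compact_space PP"
proof -
  have "compact_space (QQ :: ('a set \<Rightarrow> bool) topology)"
    unfolding QQ_def compact_space_product_topology by (simp add: compact_space_discrete_topology)
  then show ?thesis using homeomorphic_compact_space[OF PP_homeo] by blast
qed

lemma Hausdorff_PP: "Hausdorff_space PP"
proof -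
  have "Hausdorff_space (QQ :: ('a set \<Rightarrow> bool) topology)"
    unfolding QQ_def Hausdorff_space_product_topology by simp
  then show ?thesis using homeomorphic_Hausdorff_space[OF PP_homeo] by blast
qed

lemma cont_discrete_preimage:
  assumes "continuous_map Y (discrete_topology UNIV) f"
  shows "openin Y {y \<in> topspace Y. P (f y)}" "closedin Y {y \<in> topspace Y. P (f y)}"
proof -
  have "openin (discrete_topology UNIV) {b. P b}" by simp
  from openin_continuous_map_preimage[OF assms this] show "openin Y {y \<in> topspace Y. P (f y)}" by simp
  have "closedin (discrete_topology UNIV) {b. P b}" by simp
  from closedin_continuous_map_preimage[OF assms this] show "closedin Y {y \<in> topspace Y. P (f y)}" by simp
qed

lemma coord_open: "openin PP {\<A>. P (A \<in> \<A>)}"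
  using cont_discrete_preimage(1)[OF coord_cont, of P A] by simp
lemma coord_closed: "closedin PP {\<A>. P (A \<in> \<A>)}"
  using cont_discrete_preimage(2)[OF coord_cont, of P A] by simp

lemma coord3_closed: "closedin PP {\<A>. P (A \<in> \<A>) (B \<in> \<A>) (C \<in> \<A>)}"
proof -
  let ?g = "\<lambda>\<A>. (A \<in> \<A>, B \<in> \<A>, C \<in> \<A>)"
  have "continuous_map PP (prod_topology (discrete_topology UNIV) (prod_topology (discrete_topology UNIV) (discrete_topology UNIV))) ?g"
    by (simp add: continuous_map_pairwise o_def coord_cont)
  then have "continuous_map PP (discrete_topology UNIV) ?g"
    by (simp flip: prod_topology_discrete_topology)
  from cont_discrete_preimage(2)[OF this, of "\<lambda>(a,b,c). P a b c"] show ?thesis by simp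
qed

lemma closedin_INT2:
  assumes "\<And>A B. closedin PP (X A B)"
  shows "closedin PP (\<Inter>A. \<Inter>B. X A B)"
proof -
  have "\<And>A. closedin PP (\<Inter>B. X A B)"
    by (rule closedin_Inter) (use assms in auto)
  then show ?thesis by (intro closedin_Inter) auto
qed

lemma betaS_closed: "closedin PP (betaS :: 'a set set set)"
proof -
  have e: "(betaS :: 'a set set set) = {\<A>. UNIV \<in> \<A> \<and> {} \<notin> \<A>}
    \<inter> (\<Inter>A. \<Inter>B. {\<A>. A \<in> \<A> \<and> B \<in> \<A> \<longrightarrow> A \<inter> B \<in> \<A>})
    \<inter> (\<Inter>A. \<Inter>B. {\<A>. A \<in> \<A> \<and> A \<subseteq> B \<longrightarrow> B \<in> \<A>})
    \<inter> (\<Inter>A. \<Inter>B::'a set. {\<A>. A \<in> \<A> \<or> - A \<in> \<A>})"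
    unfolding betaS_def is_ultrafilter_def by auto
  show ?thesis unfolding e
    apply (intro closedin_Int closedin_INT2)
    subgoal using coord3_closed[of "\<lambda>a b c. a \<and> \<not> b" UNIV "{}" "{}"] by simp
    subgoal for A B using coord3_closed[of "\<lambda>a b c. a \<and> b \<longrightarrow> c" A B "A \<inter> B"] by simp
    subgoal for A B using coord3_closed[of "\<lambda>a b c. a \<and> A \<subseteq> B \<longrightarrow> b" A B B] by simp
    subgoal for A B using coord3_closed[of "\<lambda>a b c. a \<or> b" A "- A" A] by simp
    done
qed

section \<open>Minimal closed sets via Zorn\<close>

lemma closed_minimal:
  assumes cpt: "compact_space Y" and C0: "C0 \<in> AA"
    and cl: "\<And>C. C \<in> AA \<Longrightarrow> closedin Y C \<and> C \<noteq> {}"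
    and ch: "\<And>CC. CC \<noteq> {} \<Longrightarrow> CC \<subseteq> AA \<Longrightarrow> (\<forall>X\<in>CC. \<forall>Z\<in>CC. X \<subseteq> Z \<or> Z \<subseteq> X)
               \<Longrightarrow> \<Inter>CC \<noteq> {} \<Longrightarrow> \<Inter>CC \<in> AA"
  shows "\<exists>M\<in>AA. \<forall>C\<in>AA. C \<subseteq> M \<longrightarrow> C = M"
proof -
  have "\<exists>M\<in>uminus ` AA. \<forall>X\<in>uminus ` AA. M \<subseteq> X \<longrightarrow> X = M"
  proof (rule subset_Zorn_nonempty)
    show "uminus ` AA \<noteq> {}" using C0 by blast
  next
    fix DD assume ne: "DD \<noteq> {}" and chn: "subset.chain (uminus ` AA) DD"
    define CC where "CC = uminus ` DD"
    have DDA: "DD \<subseteq> uminus ` AA" using chn unfolding subset.chain_def by blast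
    have CCA: "CC \<subseteq> AA" unfolding CC_def using DDA by auto
    have CCne: "CC \<noteq> {}" unfolding CC_def using ne by blast
    have chC: "\<forall>X\<in>CC. \<forall>Z\<in>CC. X \<subseteq> Z \<or> Z \<subseteq> X"
      using chn unfolding subset.chain_def CC_def by blast
    have chC': "subset.chain AA CC" unfolding subset.chain_def using CCA chC by blast
    have "\<Inter>CC \<noteq> {}"
    proof -
      have "\<forall>C\<in>CC. closedin Y C" using CCA cl by blast
      moreover have "\<forall>G. finite G \<and> G \<subseteq> CC \<longrightarrow> \<Inter>G \<noteq> {}"
      proof (intro allI impI)
        fix G assume G: "finite G \<and> G \<subseteq> CC"
        show "\<Inter>G \<noteq> {}"
        proof (cases "G = {}")
          case True then show ?thesis by simp
        next
          case False
          have "subset.chain AA G" using chC' G unfolding subset.chain_def by blast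
          then have "\<Inter>G \<in> G" using Inter_in_chain G False by blast
          then show ?thesis using G CCA cl by blast
        qed
      qed
      ultimately show ?thesis using cpt unfolding compact_space_fip by blast
    qed
    then have "\<Inter>CC \<in> AA" using ch CCne CCA chC by blast
    moreover have "\<Union>DD = - \<Inter>CC" unfolding CC_def by auto
    ultimately show "\<Union>DD \<in> uminus ` AA" by auto
  qed
  then obtain M where M: "M \<in> uminus ` AA" and mx: "\<forall>X\<in>uminus ` AA. M \<subseteq> X \<longrightarrow> X = M" by blast
  have "- M \<in> AA" using M by auto
  moreover have "\<forall>C\<in>AA. C \<subseteq> - M \<longrightarrow> C = - M"
  proof (intro ballI impI)
    fix C assume "C \<in> AA" "C \<subseteq> - M"
    then have "- C \<in> uminus ` AA" "M \<subseteq> - C" by auto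
    then have "- C = M" using mx by blast
    then show "C = - M" by auto
  qed
  ultimately show ?thesis by blast
qed

section \<open>The Stone space\<close>

definition ST :: "'a set set topology" where
  "ST = subtopology PP betaS"

lemma topspace_ST [simp]: "topspace ST = betaS"
  unfolding ST_def by simp

lemma compact_ST: "compact_space ST"
  unfolding ST_def
  by (rule compact_space_subtopology, rule closedin_compact_space[OF compact_PP betaS_closed])

lemma Hausdorff_ST: "Hausdorff_space ST"
  unfolding ST_def by (rule Hausdorff_space_subtopology[OF Hausdorff_PP])

lemma basic_open: "openin ST {q \<in> betaS. A \<in> q}"
proof -
  have "openin ST (betaS \<inter> {q. A \<in> q})"
    unfolding ST_def by (rule openin_subtopology_Int2) (rule coord_open[of "\<lambda>b. b"])
  moreover have "betaS \<inter> {q. A \<in> q} = {q \<in> betaS. A \<in> q}" by auto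
  ultimately show ?thesis by simp
qed

lemma coord_cont_ST: "continuous_map ST (discrete_topology UNIV) (\<lambda>\<A>. A \<in> \<A>)"
  unfolding ST_def by (rule continuous_map_from_subtopology[OF coord_cont])

lemma rmult_cont:
  assumes q: "is_ultrafilter q"
  shows "continuous_map ST ST (\<lambda>p. umult p (q::'s::semigroup_mult set set))"
  unfolding ST_def continuous_map_in_subtopology
proof
  show "continuous_map (subtopology PP betaS) PP (\<lambda>p. umult p q)"
  proof (rule into_PP)
    fix A
    have "continuous_map ST (discrete_topology UNIV) (\<lambda>p. {x. {y. x * y \<in> A} \<in> q} \<in> p)"
      by (rule coord_cont_ST)
    then show "continuous_map (subtopology PP betaS) (discrete_topology UNIV) (\<lambda>p. A \<in> umult p q)"
      unfolding ST_def umult_def by simp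
  qed
  show "(\<lambda>p. umult p q) \<in> topspace (subtopology PP betaS) \<rightarrow> betaS"
    using umult_uf[OF _ q] unfolding betaS_def by auto
qed

lemma closedin_ST_sub: "closedin ST C \<Longrightarrow> C \<subseteq> betaS"
  using closedin_subset by fastforce

section \<open>The semigroup Fbar F\<close>

locale fsemi =
  fixes F :: "'s::semigroup_mult set set"
  assumes filt: "is_filter_on F" and sub: "subsemigroup_beta (Fbar F)"
begin

abbreviation "TT \<equiv> Fbar F"

lemma TT_beta: "TT \<subseteq> betaS" unfolding Fbar_def by auto

lemma TT_uf: "p \<in> TT \<Longrightarrow> is_ultrafilter p" unfolding Fbar_def betaS_def by auto

lemma TT_F: "p \<in> TT \<Longrightarrow> G \<in> F \<Longrightarrow> G \<in> p" unfolding Fbar_def by auto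

lemma TT_mult: "p \<in> TT \<Longrightarrow> q \<in> TT \<Longrightarrow> umult p q \<in> TT"
  using sub unfolding subsemigroup_beta_def by blast

lemma TT_I: "is_ultrafilter p \<Longrightarrow> F \<subseteq> p \<Longrightarrow> p \<in> TT"
  unfolding Fbar_def betaS_def by auto

lemma TT_ne: "TT \<noteq> {}"
proof -
  have "\<forall>A\<in>F. \<forall>B\<in>F. \<exists>C\<in>F. C \<subseteq> A \<inter> B" using filt_Int[OF filt] by blast
  moreover have "{} \<notin> F" using filt_empty[OF filt] .
  ultimately obtain p where "is_ultrafilter p" "F \<subseteq> p" using uf_extend by blast
  then show ?thesis using TT_I by blast
qed

lemma TT_closed: "closedin ST TT"
proof -
  have "closedin PP (\<Inter>G\<in>F. {\<A>. G \<in> \<A>})"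
  proof (rule closedin_Inter)
    show "(\<lambda>G. {\<A>. G \<in> \<A>}) ` F \<noteq> {}" using filt_UNIV[OF filt] by blast
    show "\<And>S. S \<in> (\<lambda>G. {\<A>. G \<in> \<A>}) ` F \<Longrightarrow> closedin PP S"
      using coord_closed[of "\<lambda>b. b"] by auto
  qed
  moreover have "TT = (\<Inter>G\<in>F. {\<A>. G \<in> \<A>}) \<inter> betaS" unfolding Fbar_def by auto
  ultimately show ?thesis unfolding ST_def closedin_subtopology by blast
qed

definition lid :: "'s set set set \<Rightarrow> bool" where
  "lid L \<longleftrightarrow> L \<noteq> {} \<and> L \<subseteq> TT \<and> (\<forall>p\<in>TT. \<forall>l\<in>L. umult p l \<in> L)"

definition minlid :: "'s set set set \<Rightarrow> bool" where
  "minlid L \<longleftrightarrow> lid L \<and> (\<forall>J. lid J \<and> J \<subseteq> L \<longrightarrow> J = L)"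

lemma TTq_lid:
  assumes q: "q \<in> TT" shows "lid ((\<lambda>p. umult p q) ` TT)"
  unfolding lid_def
proof (intro conjI ballI)
  show "(\<lambda>p. umult p q) ` TT \<noteq> {}" using TT_ne by blast
  show "(\<lambda>p. umult p q) ` TT \<subseteq> TT" using TT_mult q by blast
  fix p l assume "p \<in> TT" "l \<in> (\<lambda>p. umult p q) ` TT"
  then obtain r where "r \<in> TT" "l = umult r q" by blast
  then show "umult p l \<in> (\<lambda>p. umult p q) ` TT"
    using \<open>p \<in> TT\<close> TT_mult by (metis image_eqI umult_assoc)
qed

lemma TTq_closed:
  assumes q: "q \<in> TT" shows "closedin ST ((\<lambda>p. umult p q) ` TT)"
proof -
  have "compactin ST TT" using closedin_compact_space[OF compact_ST TT_closed] .
  then have "compactin ST ((\<lambda>p. umult p q) ` TT)"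
    using image_compactin rmult_cont TT_uf q by blast
  then show ?thesis using compactin_imp_closedin Hausdorff_ST by blast
qed

lemma lid_TT: "lid TT"
  unfolding lid_def using TT_ne TT_mult by blast

lemma lid_contains_min:
  assumes L: "lid L" shows "\<exists>M. minlid M \<and> M \<subseteq> L"
proof -
  define AA where "AA = {C. closedin ST C \<and> lid C \<and> C \<subseteq> L}"
  obtain l where l: "l \<in> L" using L unfolding lid_def by blast
  have lT: "l \<in> TT" using L l unfolding lid_def by blast
  have sub1: "(\<lambda>p. umult p l) ` TT \<subseteq> L" using L l unfolding lid_def by blast
  have C0: "(\<lambda>p. umult p l) ` TT \<in> AA"
    unfolding AA_def using TTq_closed[OF lT] TTq_lid[OF lT] sub1 by blast
  have "\<exists>M\<in>AA. \<forall>C\<in>AA. C \<subseteq> M \<longrightarrow> C = M"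
  proof (rule closed_minimal[OF compact_ST C0])
    show "\<And>C. C \<in> AA \<Longrightarrow> closedin ST C \<and> C \<noteq> {}" unfolding AA_def lid_def by blast
  next
    fix CC assume ne: "CC \<noteq> {}" and CA: "CC \<subseteq> AA" and "\<Inter>CC \<noteq> {}"
    have "closedin ST (\<Inter>CC)" using ne CA unfolding AA_def by (intro closedin_Inter) auto
    moreover have "lid (\<Inter>CC)"
      unfolding lid_def
    proof (intro conjI ballI)
      show "\<Inter>CC \<noteq> {}" by fact
      show "\<Inter>CC \<subseteq> TT" using ne CA unfolding AA_def lid_def by blast
      fix p l assume "p \<in> TT" "l \<in> \<Inter>CC"
      then show "umult p l \<in> \<Inter>CC" using CA unfolding AA_def lid_def by blast
    qed
    moreover have "\<Inter>CC \<subseteq> L" using ne CA unfolding AA_def by blast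
    ultimately show "\<Inter>CC \<in> AA" unfolding AA_def by blast
  qed
  then obtain M where M: "M \<in> AA" and mn: "\<forall>C\<in>AA. C \<subseteq> M \<longrightarrow> C = M" by blast
  have "minlid M"
    unfolding minlid_def
  proof (intro conjI allI impI)
    show "lid M" using M unfolding AA_def by blast
    fix J assume J: "lid J \<and> J \<subseteq> M"
    then obtain j where j: "j \<in> J" unfolding lid_def by blast
    have jT: "j \<in> TT" using J j unfolding lid_def by blast
    have s: "(\<lambda>p. umult p j) ` TT \<subseteq> J" using J j unfolding lid_def by blast
    have "(\<lambda>p. umult p j) ` TT \<in> AA"
      unfolding AA_def using TTq_closed[OF jT] TTq_lid[OF jT] s J M unfolding AA_def by blast
    then have "(\<lambda>p. umult p j) ` TT = M" using mn s J by blast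
    then show "J = M" using s J by blast
  qed
  then show ?thesis using M unfolding AA_def by blast
qed

lemma minlid_gen:
  assumes M: "minlid M" and l: "l \<in> M" shows "M = (\<lambda>p. umult p l) ` TT"
proof -
  have lT: "l \<in> TT" using M l unfolding minlid_def lid_def by blast
  have "(\<lambda>p. umult p l) ` TT \<subseteq> M" using M l unfolding minlid_def lid_def by blast
  then show ?thesis using M TTq_lid[OF lT] unfolding minlid_def by blast
qed

lemma minlid_closed: "minlid M \<Longrightarrow> closedin ST M"
proof -
  assume M: "minlid M"
  then obtain l where l: "l \<in> M" unfolding minlid_def lid_def by blast
  have lT: "l \<in> TT" using M l unfolding minlid_def lid_def by blast
  show ?thesis using minlid_gen[OF M l] TTq_closed[OF lT] by simp
qed

lemma minlid_sub_K:
  assumes M: "minlid M" shows "M \<subseteq> K_beta TT"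
  unfolding K_beta_def
proof (rule Inter_greatest)
  fix I assume "I \<in> {I. ideal_beta TT I}"
  then have I: "ideal_beta TT I" by simp
  have Mlid: "lid M" using M unfolding minlid_def by blast
  obtain i where i: "i \<in> I" using I unfolding ideal_beta_def by blast
  obtain m where m: "m \<in> M" using Mlid unfolding lid_def by blast
  have iT: "i \<in> TT" using I i unfolding ideal_beta_def by blast
  have "lid (I \<inter> M)"
    unfolding lid_def
  proof (intro conjI ballI)
    have "umult i m \<in> I" using I i m Mlid unfolding ideal_beta_def lid_def by blast
    moreover have "umult i m \<in> M" using Mlid iT m unfolding lid_def by blast
    ultimately show "I \<inter> M \<noteq> {}" by blast
    show "I \<inter> M \<subseteq> TT" using Mlid unfolding lid_def by blast
    fix p l assume "p \<in> TT" "l \<in> I \<inter> M"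
    then show "umult p l \<in> I \<inter> M" using I Mlid unfolding ideal_beta_def lid_def by blast
  qed
  then have "I \<inter> M = M" using M unfolding minlid_def by blast
  then show "M \<subseteq> I" by blast
qed

lemma ideal_TT: "ideal_beta TT TT"
  unfolding ideal_beta_def using TT_ne TT_mult by blast

lemma K_sub: "K_beta TT \<subseteq> TT"
  unfolding K_beta_def using ideal_TT by blast

lemma K_prop:
  assumes p: "p \<in> K_beta TT" and q: "q \<in> TT"
  shows "\<exists>r\<in>TT. umult r (umult q p) = p"
proof -
  obtain L where L: "minlid L" using lid_contains_min[OF lid_TT] by blast
  have LL: "lid L" using L unfolding minlid_def by blast
  define I where "I = {umult l t | l t. l \<in> L \<and> t \<in> TT}"
  have "ideal_beta TT I"
    unfolding ideal_beta_def
  proof (intro conjI ballI)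
    show "I \<noteq> {}" using LL TT_ne unfolding I_def lid_def by blast
    show "I \<subseteq> TT" using LL TT_mult unfolding I_def lid_def by blast
  next
    fix a b assume a: "a \<in> TT" and b: "b \<in> I"
    then obtain l t where lt: "l \<in> L" "t \<in> TT" "b = umult l t" unfolding I_def by blast
    have "umult a b = umult (umult a l) t" using lt by (simp add: umult_assoc)
    moreover have "umult a l \<in> L" using LL a lt unfolding lid_def by blast
    ultimately show "umult a b \<in> I" using lt unfolding I_def by blast
    have "umult b a = umult l (umult t a)" using lt by (simp add: umult_assoc)
    moreover have "umult t a \<in> TT" using TT_mult a lt by blast
    ultimately show "umult b a \<in> I" using lt unfolding I_def by blast
  qed
  then have "p \<in> I" using p unfolding K_beta_def by blast
  then obtain l t where lt: "l \<in> L" "t \<in> TT" "p = umult l t" unfolding I_def by blast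
  have lT: "l \<in> TT" using LL lt unfolding lid_def by blast
  have ql: "umult q l \<in> L" using LL q lt unfolding lid_def by blast
  then have "l \<in> (\<lambda>r. umult r (umult q l)) ` TT" using minlid_gen[OF L ql] lt by blast
  then obtain r where r: "r \<in> TT" "l = umult r (umult q l)" by blast
  have "umult r (umult q p) = umult (umult r (umult q l)) t" using lt by (simp add: umult_assoc)
  also have "\<dots> = p" using r lt by simp
  finally show ?thesis using r by blast
qed

lemma ellis:
  assumes C: "closedin ST C" "C \<noteq> {}" and sg: "\<forall>a\<in>C. \<forall>b\<in>C. umult a b \<in> C"
  shows "\<exists>u\<in>C. umult u u = u"
proof -
  define AA where "AA = {D. closedin ST D \<and> D \<noteq> {} \<and> D \<subseteq> C \<and> (\<forall>a\<in>D. \<forall>b\<in>D. umult a b \<in> D)}"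
  have C0: "C \<in> AA" unfolding AA_def using C sg by blast
  have "\<exists>M\<in>AA. \<forall>D\<in>AA. D \<subseteq> M \<longrightarrow> D = M"
  proof (rule closed_minimal[OF compact_ST C0])
    show "\<And>D. D \<in> AA \<Longrightarrow> closedin ST D \<and> D \<noteq> {}" unfolding AA_def by blast
  next
    fix CC assume ne: "CC \<noteq> {}" and CA: "CC \<subseteq> AA" and "\<Inter>CC \<noteq> {}"
    have "closedin ST (\<Inter>CC)" using ne CA unfolding AA_def by (intro closedin_Inter) auto
    moreover have "\<Inter>CC \<subseteq> C" using ne CA unfolding AA_def by blast
    moreover have "\<forall>a\<in>\<Inter>CC. \<forall>b\<in>\<Inter>CC. umult a b \<in> \<Inter>CC" using CA unfolding AA_def by blast
    ultimately show "\<Inter>CC \<in> AA" unfolding AA_def using \<open>\<Inter>CC \<noteq> {}\<close> by blast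
  qed
  then obtain M where M: "M \<in> AA" and mn: "\<forall>D\<in>AA. D \<subseteq> M \<longrightarrow> D = M" by blast
  have Mc: "closedin ST M" and Mne: "M \<noteq> {}" and MC: "M \<subseteq> C"
    and Ms: "\<forall>a\<in>M. \<forall>b\<in>M. umult a b \<in> M" using M unfolding AA_def by auto
  obtain u where u: "u \<in> M" using Mne by blast
  have ub: "is_ultrafilter u" using u MC C(1) closedin_ST_sub unfolding betaS_def by blast
  have Mb: "M \<subseteq> betaS" using Mc closedin_ST_sub by blast
  have cont: "continuous_map ST ST (\<lambda>p. umult p u)" using rmult_cont[OF ub] .
  have "(\<lambda>p. umult p u) ` M \<in> AA"
    unfolding AA_def
  proof (intro CollectI conjI ballI)
    have "compactin ST M" using closedin_compact_space[OF compact_ST Mc] .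
    then have "compactin ST ((\<lambda>p. umult p u) ` M)" using image_compactin cont by blast
    then show "closedin ST ((\<lambda>p. umult p u) ` M)" using compactin_imp_closedin Hausdorff_ST by blast
    show "(\<lambda>p. umult p u) ` M \<noteq> {}" using Mne by blast
    show "(\<lambda>p. umult p u) ` M \<subseteq> C" using Ms u MC by blast
    fix a b assume "a \<in> (\<lambda>p. umult p u) ` M" "b \<in> (\<lambda>p. umult p u) ` M"
    then obtain a' b' where ab: "a' \<in> M" "b' \<in> M" "a = umult a' u" "b = umult b' u" by blast
    have "umult a b = umult (umult (umult a' u) b') u" using ab by (simp add: umult_assoc)
    moreover have "umult (umult a' u) b' \<in> M" using Ms ab u by blast
    ultimately show "umult a b \<in> (\<lambda>p. umult p u) ` M" by blast
  qed
  moreover have "(\<lambda>p. umult p u) ` M \<subseteq> M" using Ms u by blast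
  ultimately have Mu: "(\<lambda>p. umult p u) ` M = M" using mn by blast
  define D where "D = {v \<in> M. umult v u = u}"
  have "D \<in> AA"
    unfolding AA_def
  proof (intro CollectI conjI ballI)
    have "closedin ST {u}" using closedin_Hausdorff_singleton[OF Hausdorff_ST] u Mb by auto
    then have "closedin ST {v \<in> topspace ST. umult v u \<in> {u}}"
      by (rule closedin_continuous_map_preimage[OF cont])
    then have "closedin ST (M \<inter> {v \<in> topspace ST. umult v u \<in> {u}})" using Mc by blast
    moreover have "M \<inter> {v \<in> topspace ST. umult v u \<in> {u}} = D" unfolding D_def using Mb by auto
    ultimately show "closedin ST D" by simp
    have "u \<in> (\<lambda>p. umult p u) ` M" using Mu u by simp
    then obtain v where "v \<in> M" "u = umult v u" by blast
    then show "D \<noteq> {}" unfolding D_def by auto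
    show "D \<subseteq> C" unfolding D_def using MC by blast
    fix a b assume "a \<in> D" "b \<in> D"
    then have ab: "a \<in> M" "b \<in> M" "umult a u = u" "umult b u = u" unfolding D_def by auto
    have "umult (umult a b) u = umult a (umult b u)" by (rule umult_assoc)
    also have "\<dots> = u" using ab by simp
    finally show "umult a b \<in> D" unfolding D_def using Ms ab by blast
  qed
  moreover have "D \<subseteq> M" unfolding D_def by blast
  ultimately have "D = M" using mn by blast
  then have "umult u u = u" using u unfolding D_def by blast
  then show ?thesis using u MC by blast
qed

end

lemma betaS_iff [simp]: "p \<in> betaS \<longleftrightarrow> is_ultrafilter p"
  unfolding betaS_def by simp

section \<open>Ultrafilter limits\<close>

definition ulim :: "'x topology \<Rightarrow> 'a set set \<Rightarrow> ('a \<Rightarrow> 'x) \<Rightarrow> 'x" where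
  "ulim X p f = (THE z. z \<in> topspace X \<and> (\<forall>V. openin X V \<and> z \<in> V \<longrightarrow> {s. f s \<in> V} \<in> p))"

lemma ulim_ex:
  assumes cpt: "compact_space X" and p: "is_ultrafilter p" and f: "\<And>s. f s \<in> topspace X"
  shows "\<exists>z. z \<in> topspace X \<and> (\<forall>V. openin X V \<and> z \<in> V \<longrightarrow> {s. f s \<in> V} \<in> p)"
proof (rule ccontr)
  assume n: "\<not> ?thesis"
  define UU where "UU = {V. openin X V \<and> {s. f s \<in> V} \<notin> p}"
  have cov: "topspace X \<subseteq> \<Union>UU" unfolding UU_def using n by blast
  have "\<forall>U\<in>UU. openin X U" unfolding UU_def by blast
  then obtain FF where FF: "finite FF" "FF \<subseteq> UU" "topspace X \<subseteq> \<Union>FF"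
    using cpt cov unfolding compact_space_def compactin_def by meson
  have "(\<Union>V\<in>FF. {s. f s \<in> V}) = UNIV" using FF(3) f by blast
  then have "(\<Union>V\<in>FF. {s. f s \<in> V}) \<in> p" using uf_UNIV[OF p] by simp
  then obtain V where "V \<in> FF" "{s. f s \<in> V} \<in> p" using uf_finite_Un[OF p FF(1)] by blast
  then show False using FF(2) unfolding UU_def by blast
qed

lemma ulim_uniq:
  assumes H: "Hausdorff_space X" and p: "is_ultrafilter p"
    and z1: "z1 \<in> topspace X" "\<forall>V. openin X V \<and> z1 \<in> V \<longrightarrow> {s. f s \<in> V} \<in> p"
    and z2: "z2 \<in> topspace X" "\<forall>V. openin X V \<and> z2 \<in> V \<longrightarrow> {s. f s \<in> V} \<in> p"
  shows "z1 = z2"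
proof (rule ccontr)
  assume "z1 \<noteq> z2"
  with H z1(1) z2(1) obtain U V where UV: "openin X U" "openin X V" "z1 \<in> U" "z2 \<in> V" "disjnt U V"
    unfolding Hausdorff_space_def by metis
  have "{s. f s \<in> U} \<in> p" using UV(1,3) z1(2) by blast
  moreover have "{s. f s \<in> V} \<in> p" using UV(2,4) z2(2) by blast
  moreover have "{s. f s \<in> U} \<inter> {s. f s \<in> V} = {}" using UV(5) unfolding disjnt_def by blast
  ultimately show False using uf_disj[OF p] by blast
qed

lemma ulim:
  assumes cpt: "compact_space X" and H: "Hausdorff_space X" and p: "is_ultrafilter p"
    and f: "\<And>s. f s \<in> topspace X"
  shows "ulim X p f \<in> topspace X \<and> (\<forall>V. openin X V \<and> ulim X p f \<in> V \<longrightarrow> {s. f s \<in> V} \<in> p)"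
proof -
  define P where "P = (\<lambda>z. z \<in> topspace X \<and> (\<forall>V. openin X V \<and> z \<in> V \<longrightarrow> {s. f s \<in> V} \<in> p))"
  obtain z where zz: "z \<in> topspace X \<and> (\<forall>V. openin X V \<and> z \<in> V \<longrightarrow> {s. f s \<in> V} \<in> p)"
    using ulim_ex[OF cpt p f] by (rule exE)
  have z1: "z \<in> topspace X" and z2: "\<forall>V. openin X V \<and> z \<in> V \<longrightarrow> {s. f s \<in> V} \<in> p"
    using zz by simp_all
  have z: "P z" unfolding P_def by (rule zz)
  have u: "\<And>z'. P z' \<Longrightarrow> z' = z"
  proof -
    fix z' assume "P z'"
    then have "z' \<in> topspace X" "\<forall>V. openin X V \<and> z' \<in> V \<longrightarrow> {s. f s \<in> V} \<in> p"
      unfolding P_def by simp_all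
    then show "z' = z" by (rule ulim_uniq[OF H p _ _ z1 z2])
  qed
  have "P (THE z. P z)" by (rule theI[of P z, OF z u])
  then show ?thesis unfolding ulim_def P_def .
qed

lemma ulim_eq:
  assumes cpt: "compact_space X" and H: "Hausdorff_space X" and p: "is_ultrafilter p"
    and f: "\<And>s. f s \<in> topspace X"
    and z: "z \<in> topspace X" "\<forall>V. openin X V \<and> z \<in> V \<longrightarrow> {s. f s \<in> V} \<in> p"
  shows "ulim X p f = z"
proof -
  have "ulim X p f \<in> topspace X" "\<forall>V. openin X V \<and> ulim X p f \<in> V \<longrightarrow> {s. f s \<in> V} \<in> p"
    using ulim[OF cpt H p f] by auto
  from ulim_uniq[OF H p this z] show ?thesis .
qed

section \<open>Dynamical systems\<close>

locale dyn =
  fixes X :: "'x topology" and T :: "'s::semigroup_mult \<Rightarrow> 'x \<Rightarrow> 'x"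
  assumes ds: "dyn_system X T"
begin

lemma cpt: "compact_space X" using ds unfolding dyn_system_def by blast
lemma Hd: "Hausdorff_space X" using ds unfolding dyn_system_def by blast
lemma Tcont: "continuous_map X X (T s)" using ds unfolding dyn_system_def by blast
lemma Tcomp: "x \<in> topspace X \<Longrightarrow> T s (T t x) = T (s * t) x" using ds unfolding dyn_system_def by blast
lemma Ttop: "x \<in> topspace X \<Longrightarrow> T s x \<in> topspace X"
  using Tcont unfolding continuous_map_def by blast
lemma reg: "regular_space X" using compact_Hausdorff_imp_regular_space[OF cpt Hd] .

lemma reg_nb:
  assumes "closedin X C" "a \<in> topspace X - C"
  obtains U where "openin X U" "a \<in> U" "disjnt C (X closure_of U)"
  using reg assms unfolding regular_space by meson

definition Tp :: "'s set set \<Rightarrow> 'x \<Rightarrow> 'x" where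
  "Tp p x = ulim X p (\<lambda>s. T s x)"

lemma Tp_top: "is_ultrafilter p \<Longrightarrow> x \<in> topspace X \<Longrightarrow> Tp p x \<in> topspace X"
  unfolding Tp_def using ulim[OF cpt Hd, of p "\<lambda>s. T s x"] Ttop by blast

lemma Tp_open: "is_ultrafilter p \<Longrightarrow> x \<in> topspace X \<Longrightarrow> openin X V \<Longrightarrow> Tp p x \<in> V
   \<Longrightarrow> {s. T s x \<in> V} \<in> p"
  unfolding Tp_def using ulim[OF cpt Hd, of p "\<lambda>s. T s x"] Ttop by blast

lemma Tp_eqI: "is_ultrafilter p \<Longrightarrow> x \<in> topspace X \<Longrightarrow> z \<in> topspace X
   \<Longrightarrow> (\<And>V. openin X V \<Longrightarrow> z \<in> V \<Longrightarrow> {s. T s x \<in> V} \<in> p) \<Longrightarrow> Tp p x = z"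
  unfolding Tp_def by (rule ulim_eq[OF cpt Hd]) (use Ttop in auto)

lemma Tp_mult:
  assumes p: "is_ultrafilter p" and q: "is_ultrafilter q" and x: "x \<in> topspace X"
  shows "Tp p (Tp q x) = Tp (umult p q) x"
proof -
  define z where "z = Tp q x"
  have z: "z \<in> topspace X" unfolding z_def using Tp_top[OF q x] .
  define w where "w = Tp p z"
  have w: "w \<in> topspace X" unfolding w_def using Tp_top[OF p z] .
  have "Tp (umult p q) x = w"
  proof (rule Tp_eqI[OF umult_uf[OF p q] x w])
    fix V assume V: "openin X V" "w \<in> V"
    have P1: "{s. T s z \<in> V} \<in> p" using Tp_open[OF p z V(1)] V(2) unfolding w_def by blast
    have "{s. T s z \<in> V} \<subseteq> {s. {y. s * y \<in> {u. T u x \<in> V}} \<in> q}"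
    proof
      fix s assume s: "s \<in> {s. T s z \<in> V}"
      define W where "W = {a \<in> topspace X. T s a \<in> V}"
      have Wo: "openin X W" unfolding W_def using openin_continuous_map_preimage[OF Tcont V(1)] .
      have "z \<in> W" unfolding W_def using s z by blast
      then have "{v. T v x \<in> W} \<in> q" using Tp_open[OF q x Wo] unfolding z_def by blast
      moreover have "{v. T v x \<in> W} \<subseteq> {y. s * y \<in> {u. T u x \<in> V}}"
        unfolding W_def using Tcomp[OF x] by auto
      ultimately show "s \<in> {s. {y. s * y \<in> {u. T u x \<in> V}} \<in> q}" using uf_mono[OF q] by blast
    qed
    then have "{s. {y. s * y \<in> {u. T u x \<in> V}} \<in> q} \<in> p" using uf_mono[OF p P1] by blast
    then show "{s. T s x \<in> V} \<in> umult p q" unfolding umult_def by simp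
  qed
  then show ?thesis unfolding w_def z_def by simp
qed

lemma Tp_closure:
  assumes q: "is_ultrafilter q" and x: "x \<in> topspace X" and V: "{s. T s x \<in> V} \<in> q"
  shows "Tp q x \<in> X closure_of V"
  unfolding in_closure_of
proof (intro conjI allI impI)
  show "Tp q x \<in> topspace X" using Tp_top[OF q x] .
  fix W assume W: "Tp q x \<in> W \<and> openin X W"
  then have "{s. T s x \<in> W} \<in> q" using Tp_open[OF q x] by blast
  then have "{s. T s x \<in> V} \<inter> {s. T s x \<in> W} \<noteq> {}" using uf_disj[OF q V] by blast
  then show "\<exists>y. y \<in> V \<and> y \<in> W" by blast
qed

lemma Tp_cont:
  assumes x: "x \<in> topspace X"
  shows "continuous_map ST X (\<lambda>q. Tp q x)"
  unfolding continuous_map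
proof (intro conjI allI impI)
  show "(\<lambda>q. Tp q x) ` topspace ST \<subseteq> topspace X"
  proof (rule image_subsetI)
    fix q :: "'s set set" assume "q \<in> topspace ST"
    then have "is_ultrafilter q" by (simp add: betaS_def)
    then show "Tp q x \<in> topspace X" using Tp_top[OF _ x] by blast
  qed
  fix U assume U: "openin X U"
  show "openin ST {q \<in> topspace ST. Tp q x \<in> U}"
  proof (subst openin_subopen, intro ballI)
    fix q assume qq: "q \<in> {q \<in> topspace ST. Tp q x \<in> U}"
    then have q: "is_ultrafilter q" by simp
    have "closedin X (topspace X - U)" using closedin_diff[OF closedin_topspace U] .
    moreover have "Tp q x \<in> topspace X - (topspace X - U)" using qq Tp_top[OF q x] by simp
    ultimately obtain V' where V': "openin X V'" "Tp q x \<in> V'" "disjnt (topspace X - U) (X closure_of V')"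
      by (rule reg_nb)
    define A where "A = {s. T s x \<in> V'}"
    have A: "A \<in> q" unfolding A_def using Tp_open[OF q x V'(1) V'(2)] .
    have "{q' \<in> betaS. A \<in> q'} \<subseteq> {q \<in> topspace ST. Tp q x \<in> U}"
    proof
      fix q' assume "q' \<in> {q' \<in> betaS. A \<in> q'}"
      then have q': "is_ultrafilter q'" "A \<in> q'" "q' \<in> betaS" by auto
      have "Tp q' x \<in> X closure_of V'" using Tp_closure[OF q'(1) x] q'(2) unfolding A_def .
      moreover have "X closure_of V' \<subseteq> topspace X" by (rule closure_of_subset_topspace)
      ultimately have "Tp q' x \<in> U" using V'(3) unfolding disjnt_def by blast
      then show "q' \<in> {q \<in> topspace ST. Tp q x \<in> U}" using q'(3) by simp
    qed
    moreover have "q \<in> {q' \<in> betaS. A \<in> q'}" using A qq by simp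
    ultimately show "\<exists>T. openin ST T \<and> q \<in> T \<and> T \<subseteq> {q \<in> topspace ST. Tp q x \<in> U}"
      using basic_open[of A] by (intro exI[of _ "{q' \<in> betaS. A \<in> q'}"]) simp
  qed
qed

end

locale dynF = fsemi F + dyn X T
  for F :: "'s::semigroup_mult set set" and X :: "'x topology" and T :: "'s \<Rightarrow> 'x \<Rightarrow> 'x"
begin

lemma syndetic_mono:
  assumes "F_syndetic F A" "A \<subseteq> A'" shows "F_syndetic F A'"
  unfolding F_syndetic_def
proof (intro ballI)
  fix G assume "G \<in> F"
  then obtain H where H: "finite H" "H \<subseteq> G" "(\<Union>t\<in>H. {y. t * y \<in> A}) \<in> F"
    using assms(1) unfolding F_syndetic_def by blast
  have "(\<Union>t\<in>H. {y. t * y \<in> A}) \<subseteq> (\<Union>t\<in>H. {y. t * y \<in> A'})" using assms(2) by blast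
  then have "(\<Union>t\<in>H. {y. t * y \<in> A'}) \<in> F" using filt_mono[OF filt H(3)] by blast
  then show "\<exists>H. finite H \<and> H \<subseteq> G \<and> (\<Union>t\<in>H. {y. t * y \<in> A'}) \<in> F" using H by blast
qed

lemma nbhd_open:
  assumes "nbhd Y U A" obtains V where "openin Y V" "A \<subseteq> V" "V \<subseteq> U"
  using assms unfolding nbhd_def by blast

lemma prox_from:
  assumes p: "p \<in> TT" and x: "x \<in> topspace X" and y: "y \<in> topspace X"
    and px: "Tp p x = y" and py: "Tp p y = y"
  shows "F_proximal F X T x y"
  unfolding F_proximal_def
proof (intro allI impI ballI)
  fix W G assume W: "nbhd (prod_topology X X) W {(z, z) |z. z \<in> topspace X}" and G: "G \<in> F"
  obtain W' where W': "openin (prod_topology X X) W'" "{(z, z) |z. z \<in> topspace X} \<subseteq> W'" "W' \<subseteq> W"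
    using W by (rule nbhd_open)
  have "(y, y) \<in> W'" using W'(2) y by blast
  then obtain V1 V2 where V: "openin X V1" "openin X V2" "y \<in> V1" "y \<in> V2" "V1 \<times> V2 \<subseteq> W'"
    using W'(1) unfolding openin_prod_topology_alt by meson
  have pu: "is_ultrafilter p" using TT_uf[OF p] .
  have S1: "{s. T s x \<in> V1} \<in> p" using Tp_open[OF pu x V(1)] V(3) px by simp
  have S2: "{s. T s y \<in> V2} \<in> p" using Tp_open[OF pu y V(2)] V(4) py by simp
  have "G \<in> p" using TT_F[OF p G] .
  then have "{s. T s x \<in> V1} \<inter> {s. T s y \<in> V2} \<inter> G \<in> p" using uf_Int[OF pu] S1 S2 by blast
  then have "{s. T s x \<in> V1} \<inter> {s. T s y \<in> V2} \<inter> G \<noteq> {}" using uf_empty[OF pu] by metis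
  then obtain s where "s \<in> G" "T s x \<in> V1" "T s y \<in> V2" by blast
  then have "s \<in> G" "(T s x, T s y) \<in> W" using V(5) W'(3) by auto
  then show "\<exists>s\<in>G. (T s x, T s y) \<in> W" by blast
qed

lemma unifrec_from:
  assumes p: "p \<in> K_beta TT" and y: "y \<in> topspace X" and py: "Tp p y = y"
  shows "F_unif_rec F X T y"
  unfolding F_unif_rec_def
proof (intro allI impI)
  fix U assume "nbhd X U {y}"
  then obtain V where V: "openin X V" "{y} \<subseteq> V" "V \<subseteq> U" by (rule nbhd_open)
  define A where "A = {s. T s y \<in> V}"
  have pT: "p \<in> TT" using p K_sub by blast
  have pu: "is_ultrafilter p" using TT_uf[OF pT] .
  have "F_syndetic F A"
    unfolding F_syndetic_def
  proof (rule ballI, rule ccontr)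
    fix G assume G: "G \<in> F" and nH: "\<not> (\<exists>H. finite H \<and> H \<subseteq> G \<and> (\<Union>t\<in>H. {y. t * y \<in> A}) \<in> F)"
    define UH where "UH = (\<lambda>H. \<Union>t\<in>H. {y. t * y \<in> A})"
    define GG where "GG = {E \<inter> - UH H | E H. E \<in> F \<and> finite H \<and> H \<subseteq> G}"
    have GGI: "\<And>E H. E \<in> F \<Longrightarrow> finite H \<Longrightarrow> H \<subseteq> G \<Longrightarrow> E \<inter> - UH H \<in> GG"
      unfolding GG_def by blast
    have "\<forall>P\<in>GG. \<forall>Q\<in>GG. \<exists>R\<in>GG. R \<subseteq> P \<inter> Q"
    proof (intro ballI)
      fix P Q assume "P \<in> GG" "Q \<in> GG"
      then obtain E1 H1 E2 H2 where h: "P = E1 \<inter> - UH H1" "E1 \<in> F" "finite H1" "H1 \<subseteq> G"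
        "Q = E2 \<inter> - UH H2" "E2 \<in> F" "finite H2" "H2 \<subseteq> G" unfolding GG_def by blast
      have "UH (H1 \<union> H2) = UH H1 \<union> UH H2" unfolding UH_def by blast
      then have "(E1 \<inter> E2) \<inter> - UH (H1 \<union> H2) = P \<inter> Q" using h by blast
      moreover have "(E1 \<inter> E2) \<inter> - UH (H1 \<union> H2) \<in> GG"
        by (rule GGI) (use h filt_Int[OF filt] in auto)
      ultimately show "\<exists>R\<in>GG. R \<subseteq> P \<inter> Q" by (metis order_refl)
    qed
    moreover have "{} \<notin> GG"
    proof
      assume "{} \<in> GG"
      then obtain E H where h: "E \<inter> - UH H = {}" "E \<in> F" "finite H" "H \<subseteq> G" unfolding GG_def by blast
      then have "E \<subseteq> UH H" by blast
      then have "UH H \<in> F" using filt_mono[OF filt h(2)] by blast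
      then show False using nH h unfolding UH_def by blast
    qed
    ultimately obtain q where q: "is_ultrafilter q" "GG \<subseteq> q" using uf_extend by blast
    have "F \<subseteq> q"
    proof
      fix E assume "E \<in> F"
      then have "E \<inter> - UH {} \<in> GG" by (rule GGI) auto
      then show "E \<in> q" using q unfolding UH_def by auto
    qed
    then have qT: "q \<in> TT" using TT_I q(1) by blast
    have nt: "\<And>t. t \<in> G \<Longrightarrow> - {u. t * u \<in> A} \<in> q"
    proof -
      fix t assume "t \<in> G"
      then have "UNIV \<inter> - UH {t} \<in> GG" by (intro GGI filt_UNIV[OF filt]) auto
      then show "- {u. t * u \<in> A} \<in> q" using q unfolding UH_def by auto
    qed
    define z where "z = Tp q y"
    have z: "z \<in> topspace X" unfolding z_def using Tp_top[OF q(1) y] .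
    have zV: "\<And>t. t \<in> G \<Longrightarrow> T t z \<notin> V"
    proof
      fix t assume t: "t \<in> G" and tz: "T t z \<in> V"
      define W where "W = {a \<in> topspace X. T t a \<in> V}"
      have Wo: "openin X W" unfolding W_def using openin_continuous_map_preimage[OF Tcont V(1)] .
      have "z \<in> W" unfolding W_def using z tz by blast
      then have "{u. T u y \<in> W} \<in> q" using Tp_open[OF q(1) y Wo] unfolding z_def by blast
      moreover have "{u. T u y \<in> W} \<subseteq> {u. t * u \<in> A}"
        unfolding W_def A_def using Tcomp[OF y] by auto
      ultimately have "{u. t * u \<in> A} \<in> q" using uf_mono[OF q(1)] by blast
      then show False using nt[OF t] uf_compl_iff[OF q(1)] by blast
    qed
    obtain r where r: "r \<in> TT" "umult r (umult q p) = p" using K_prop[OF p qT] by blast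
    have ru: "is_ultrafilter r" using TT_uf[OF r(1)] .
    have "Tp r z = Tp r (Tp q (Tp p y))" unfolding z_def py ..
    also have "\<dots> = Tp (umult r (umult q p)) y"
      using Tp_mult[OF q(1) pu y] Tp_mult[OF ru umult_uf[OF q(1) pu] y] by simp
    also have "\<dots> = y" using r(2) py by simp
    finally have "Tp r z = y" .
    then have "{t. T t z \<in> V} \<in> r" using Tp_open[OF ru z V(1)] V(2) by simp
    moreover have "G \<in> r" using TT_F[OF r(1) G] .
    ultimately have "{t. T t z \<in> V} \<inter> G \<in> r" using uf_Int[OF ru] by blast
    then have "{t. T t z \<in> V} \<inter> G \<noteq> {}" using uf_empty[OF ru] by metis
    then show False using zV by blast
  qed
  moreover have "A \<subseteq> {s. T s y \<in> U}" unfolding A_def using V(3) by blast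
  ultimately show "F_syndetic F {s. T s y \<in> U}" by (rule syndetic_mono)
qed


lemma reg_closure_sub:
  assumes "openin X U" "a \<in> U"
  obtains Ob where "openin X Ob" "a \<in> Ob" "X closure_of Ob \<subseteq> U"
proof -
  have U: "U \<subseteq> topspace X" using openin_subset[OF assms(1)] .
  have "closedin X (topspace X - U)" using closedin_diff[OF closedin_topspace assms(1)] .
  moreover have "a \<in> topspace X - (topspace X - U)" using assms(2) U by blast
  ultimately obtain Ob where Ob: "openin X Ob" "a \<in> Ob" "disjnt (topspace X - U) (X closure_of Ob)"
    by (rule reg_nb)
  have "X closure_of Ob \<subseteq> topspace X" by (rule closure_of_subset_topspace)
  then have "X closure_of Ob \<subseteq> U" using Ob(3) unfolding disjnt_def by blast
  then show ?thesis using Ob that by blast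
qed

lemma proximal_point:
  assumes x: "x \<in> topspace X" and y: "y \<in> topspace X" and pr: "F_proximal F X T x y"
  shows "\<exists>r\<in>TT. Tp r x = Tp r y"
proof -
  define D where "D = {(z, z) |z. z \<in> topspace X}"
  define GG where "GG = {G \<inter> {s. (T s x, T s y) \<in> W} | G W. G \<in> F \<and> nbhd (prod_topology X X) W D}"
  have GGI: "\<And>G W. G \<in> F \<Longrightarrow> nbhd (prod_topology X X) W D \<Longrightarrow> G \<inter> {s. (T s x, T s y) \<in> W} \<in> GG"
    unfolding GG_def by blast
  have "\<forall>P\<in>GG. \<forall>Q\<in>GG. \<exists>R\<in>GG. R \<subseteq> P \<inter> Q"
  proof (intro ballI)
    fix P Q assume "P \<in> GG" "Q \<in> GG"
    then obtain G1 W1 G2 W2 where h: "P = G1 \<inter> {s. (T s x, T s y) \<in> W1}" "G1 \<in> F" "nbhd (prod_topology X X) W1 D"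
        "Q = G2 \<inter> {s. (T s x, T s y) \<in> W2}" "G2 \<in> F" "nbhd (prod_topology X X) W2 D"
      unfolding GG_def by blast
    obtain V1 where V1: "openin (prod_topology X X) V1" "D \<subseteq> V1" "V1 \<subseteq> W1" using h(3) by (rule nbhd_open)
    obtain V2 where V2: "openin (prod_topology X X) V2" "D \<subseteq> V2" "V2 \<subseteq> W2" using h(6) by (rule nbhd_open)
    have "nbhd (prod_topology X X) (W1 \<inter> W2) D"
      unfolding nbhd_def
    proof (intro conjI exI[of _ "V1 \<inter> V2"])
      show "W1 \<inter> W2 \<subseteq> topspace (prod_topology X X)" using h(3) unfolding nbhd_def by blast
      show "openin (prod_topology X X) (V1 \<inter> V2)" using V1(1) V2(1) by (rule openin_Int)
      show "D \<subseteq> V1 \<inter> V2" using V1 V2 by blast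
      show "V1 \<inter> V2 \<subseteq> W1 \<inter> W2" using V1 V2 by blast
    qed
    then have "(G1 \<inter> G2) \<inter> {s. (T s x, T s y) \<in> W1 \<inter> W2} \<in> GG"
      by (intro GGI filt_Int[OF filt] h)
    moreover have "(G1 \<inter> G2) \<inter> {s. (T s x, T s y) \<in> W1 \<inter> W2} = P \<inter> Q" using h by blast
    ultimately show "\<exists>R\<in>GG. R \<subseteq> P \<inter> Q" by (metis order_refl)
  qed
  moreover have "{} \<notin> GG"
  proof
    assume "{} \<in> GG"
    then obtain G W where h: "G \<inter> {s. (T s x, T s y) \<in> W} = {}" "G \<in> F" "nbhd (prod_topology X X) W D"
      unfolding GG_def by blast
    have "\<forall>G\<in>F. \<exists>s\<in>G. (T s x, T s y) \<in> W" using pr h(3) unfolding F_proximal_def D_def by blast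
    then obtain s where "s \<in> G" "(T s x, T s y) \<in> W" using h(2) by blast
    then show False using h(1) by blast
  qed
  ultimately obtain r where r: "is_ultrafilter r" "GG \<subseteq> r" using uf_extend by blast
  have tpo: "openin (prod_topology X X) (topspace X \<times> topspace X)"
    using openin_topspace[of "prod_topology X X"] by (simp add: topspace_prod_topology)
  have topn: "nbhd (prod_topology X X) (topspace X \<times> topspace X) D"
    unfolding nbhd_def D_def
    by (intro conjI exI[of _ "topspace X \<times> topspace X"]) (use tpo in \<open>auto simp: topspace_prod_topology\<close>)
  have "F \<subseteq> r"
  proof
    fix G assume G: "G \<in> F"
    have "G \<inter> {s. (T s x, T s y) \<in> topspace X \<times> topspace X} \<in> GG" by (rule GGI[OF G topn])
    moreover have "G \<inter> {s. (T s x, T s y) \<in> topspace X \<times> topspace X} = G" using Ttop[OF x] Ttop[OF y] by blast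
    ultimately show "G \<in> r" using r(2) by auto
  qed
  then have rT: "r \<in> TT" using TT_I r(1) by blast
  have "Tp r x = Tp r y"
  proof (rule ccontr)
    assume ne: "Tp r x \<noteq> Tp r y"
    have a: "Tp r x \<in> topspace X" using Tp_top[OF r(1) x] .
    have b: "Tp r y \<in> topspace X" using Tp_top[OF r(1) y] .
    obtain U1 U2 where U: "openin X U1" "openin X U2" "Tp r x \<in> U1" "Tp r y \<in> U2" "disjnt U1 U2"
      using Hd a b ne unfolding Hausdorff_space_def by metis
    obtain O1 where O1: "openin X O1" "Tp r x \<in> O1" "X closure_of O1 \<subseteq> U1" using U(1,3) by (rule reg_closure_sub)
    obtain O2 where O2: "openin X O2" "Tp r y \<in> O2" "X closure_of O2 \<subseteq> U2" using U(2,4) by (rule reg_closure_sub)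
    define W where "W = topspace X \<times> topspace X - (X closure_of O1) \<times> (X closure_of O2)"
    have "closedin (prod_topology X X) ((X closure_of O1) \<times> (X closure_of O2))"
      unfolding closedin_prod_Times_iff by simp
    then have Wo: "openin (prod_topology X X) W"
      unfolding W_def using openin_diff[OF openin_topspace, of "prod_topology X X"]
      by (simp add: topspace_prod_topology)
    have DW: "D \<subseteq> W" unfolding W_def D_def using O1(3) O2(3) U(5) unfolding disjnt_def by blast
    have "nbhd (prod_topology X X) W D"
      unfolding nbhd_def
    proof (intro conjI exI[of _ W])
      show "W \<subseteq> topspace (prod_topology X X)" unfolding W_def by (simp add: topspace_prod_topology)
    qed (use Wo DW in auto)
    then have "UNIV \<inter> {s. (T s x, T s y) \<in> W} \<in> GG" by (rule GGI[OF filt_UNIV[OF filt]])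
    then have S0: "{s. (T s x, T s y) \<in> W} \<in> r" using r(2) by auto
    have S1: "{s. T s x \<in> O1} \<in> r" using Tp_open[OF r(1) x O1(1) O1(2)] .
    have S2: "{s. T s y \<in> O2} \<in> r" using Tp_open[OF r(1) y O2(1) O2(2)] .
    have c1: "O1 \<subseteq> X closure_of O1" using closure_of_subset[OF openin_subset[OF O1(1)]] .
    have c2: "O2 \<subseteq> X closure_of O2" using closure_of_subset[OF openin_subset[OF O2(1)]] .
    have "{s. (T s x, T s y) \<in> W} \<inter> ({s. T s x \<in> O1} \<inter> {s. T s y \<in> O2}) = {}"
      unfolding W_def using c1 c2 by blast
    moreover have "{s. (T s x, T s y) \<in> W} \<inter> ({s. T s x \<in> O1} \<inter> {s. T s y \<in> O2}) \<in> r"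
      by (rule uf_Int[OF r(1) S0 uf_Int[OF r(1) S1 S2]])
    ultimately show False using uf_empty[OF r(1)] by simp
  qed
  then show ?thesis using rT by blast
qed

lemma syn_step:
  assumes y: "y \<in> topspace X" and ur: "F_unif_rec F X T y" and L: "minlid L"
    and V: "openin X V" "y \<in> V"
  shows "\<exists>q\<in>L. {s. T s y \<in> V} \<in> q"
proof -
  define A where "A = {s. T s y \<in> V}"
  have "nbhd X V {y}" unfolding nbhd_def using V openin_subset[OF V(1)] by blast
  then have syn: "F_syndetic F A" using ur unfolding F_unif_rec_def A_def by blast
  have LL: "lid L" using L unfolding minlid_def by blast
  obtain l where l: "l \<in> L" using LL unfolding lid_def by blast
  have lT: "l \<in> TT" using LL l unfolding lid_def by blast
  have lu: "is_ultrafilter l" using TT_uf[OF lT] .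
  define D where "D = {t. {z. t * z \<in> A} \<in> l}"
  have meet: "\<And>G. G \<in> F \<Longrightarrow> G \<inter> D \<noteq> {}"
  proof -
    fix G assume G: "G \<in> F"
    then obtain H where H: "finite H" "H \<subseteq> G" "(\<Union>t\<in>H. {z. t * z \<in> A}) \<in> F"
      using syn unfolding F_syndetic_def by blast
    have "(\<Union>t\<in>H. {z. t * z \<in> A}) \<in> l" using TT_F[OF lT H(3)] .
    then obtain t where "t \<in> H" "{z. t * z \<in> A} \<in> l" using uf_finite_Un[OF lu H(1)] by blast
    then show "G \<inter> D \<noteq> {}" unfolding D_def using H(2) by blast
  qed
  define GG where "GG = (\<lambda>G. G \<inter> D) ` F"
  have "\<forall>P\<in>GG. \<forall>Q\<in>GG. \<exists>R\<in>GG. R \<subseteq> P \<inter> Q"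
  proof (intro ballI)
    fix P Q assume "P \<in> GG" "Q \<in> GG"
    then obtain G1 G2 where h: "G1 \<in> F" "G2 \<in> F" "P = G1 \<inter> D" "Q = G2 \<inter> D" unfolding GG_def by blast
    have "(G1 \<inter> G2) \<inter> D \<in> GG" unfolding GG_def using filt_Int[OF filt h(1,2)] by blast
    moreover have "(G1 \<inter> G2) \<inter> D = P \<inter> Q" using h by blast
    ultimately show "\<exists>R\<in>GG. R \<subseteq> P \<inter> Q" by (metis order_refl)
  qed
  moreover have "{} \<notin> GG" unfolding GG_def using meet by auto
  ultimately obtain r where r: "is_ultrafilter r" "GG \<subseteq> r" using uf_extend by blast
  have "F \<subseteq> r"
  proof
    fix G assume G: "G \<in> F"
    then have "G \<inter> D \<in> r" using r(2) unfolding GG_def by blast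
    then show "G \<in> r" using uf_mono[OF r(1)] by blast
  qed
  then have rT: "r \<in> TT" using TT_I r(1) by blast
  have "UNIV \<inter> D \<in> r" using r(2) filt_UNIV[OF filt] unfolding GG_def by blast
  then have "D \<in> r" by simp
  then have "A \<in> umult r l" unfolding umult_def D_def by simp
  moreover have "umult r l \<in> L" using LL rT l unfolding lid_def by blast
  ultimately show ?thesis unfolding A_def by blast
qed

lemma unifrec_min:
  assumes y: "y \<in> topspace X" and ur: "F_unif_rec F X T y" and L: "minlid L"
  shows "\<exists>q\<in>L. Tp q y = y"
proof -
  have Lc: "closedin ST L" using minlid_closed[OF L] .
  have LT: "L \<subseteq> TT" using L unfolding minlid_def lid_def by blast
  define VV where "VV = {V. openin X V \<and> y \<in> V}"
  define C where "C = (\<lambda>V. {q \<in> L. Tp q y \<in> X closure_of V})"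
  have Cc: "\<And>V. closedin ST (C V)"
    unfolding C_def by (rule closedin_continuous_map_preimage_gen[OF Tp_cont[OF y] Lc closedin_closure_of])
  have "\<Inter>(C ` VV) \<noteq> {}"
  proof -
    have "\<forall>K\<in>C ` VV. closedin ST K" using Cc by blast
    moreover have "\<forall>FF. finite FF \<and> FF \<subseteq> C ` VV \<longrightarrow> \<Inter>FF \<noteq> {}"
    proof (intro allI impI)
      fix FF assume FF: "finite FF \<and> FF \<subseteq> C ` VV"
      then obtain VV' where VV': "VV' \<subseteq> VV" "finite VV'" "FF = C ` VV'"
        by (meson finite_subset_image)
      define V0 where "V0 = (\<Inter>V\<in>VV'. V) \<inter> topspace X"
      have V0o: "openin X V0" unfolding V0_def using VV' unfolding VV_def by (intro openin_INT) auto
      have yV0: "y \<in> V0" unfolding V0_def using VV' y unfolding VV_def by blast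
      obtain q where q: "q \<in> L" "{s. T s y \<in> V0} \<in> q" using syn_step[OF y ur L V0o yV0] by blast
      have qu: "is_ultrafilter q" using TT_uf q(1) LT by blast
      have "q \<in> \<Inter>FF"
      proof
        fix K assume "K \<in> FF"
        then obtain V where V: "V \<in> VV'" "K = C V" using VV' by blast
        have "{s. T s y \<in> V0} \<subseteq> {s. T s y \<in> V}" unfolding V0_def using V(1) by blast
        then have "{s. T s y \<in> V} \<in> q" using uf_mono[OF qu q(2)] by blast
        then have "Tp q y \<in> X closure_of V" using Tp_closure[OF qu y] by blast
        then show "q \<in> K" unfolding V(2) C_def using q(1) by blast
      qed
      then show "\<Inter>FF \<noteq> {}" by blast
    qed
    ultimately show ?thesis using compact_ST unfolding compact_space_fip by blast
  qed
  moreover have "topspace X \<in> VV" unfolding VV_def using y by simp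
  ultimately obtain q where q: "q \<in> L" "\<And>V. V \<in> VV \<Longrightarrow> Tp q y \<in> X closure_of V"
    unfolding C_def by blast
  have qu: "is_ultrafilter q" using TT_uf q(1) LT by blast
  have "Tp q y = y"
  proof (rule ccontr)
    assume ne: "Tp q y \<noteq> y"
    have a: "Tp q y \<in> topspace X" using Tp_top[OF qu y] .
    obtain U1 U2 where U: "openin X U1" "openin X U2" "Tp q y \<in> U1" "y \<in> U2" "disjnt U1 U2"
      using Hd a y ne unfolding Hausdorff_space_def by metis
    have "Tp q y \<in> X closure_of U2" using q(2) U(2,4) unfolding VV_def by blast
    then obtain w where "w \<in> U2" "w \<in> U1" using U(1,3) unfolding in_closure_of by blast
    then show False using U(5) unfolding disjnt_def by blast
  qed
  then show ?thesis using q(1) by blast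
qed

lemma idem_min:
  assumes y: "y \<in> topspace X" and ur: "F_unif_rec F X T y" and L: "minlid L"
  shows "\<exists>u\<in>L. umult u u = u \<and> Tp u y = y"
proof -
  have Lc: "closedin ST L" using minlid_closed[OF L] .
  have LL: "lid L" using L unfolding minlid_def by blast
  have LT: "L \<subseteq> TT" using LL unfolding lid_def by blast
  define C where "C = {q \<in> L. Tp q y \<in> {y}}"
  have Cc: "closedin ST C"
    unfolding C_def by (rule closedin_continuous_map_preimage_gen[OF Tp_cont[OF y] Lc closedin_Hausdorff_singleton[OF Hd y]])
  have Cne: "C \<noteq> {}" using unifrec_min[OF y ur L] unfolding C_def by blast
  have "\<forall>a\<in>C. \<forall>b\<in>C. umult a b \<in> C"
  proof (intro ballI)
    fix a b assume "a \<in> C" "b \<in> C"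
    then have ab: "a \<in> L" "b \<in> L" "Tp a y = y" "Tp b y = y" unfolding C_def by auto
    have au: "is_ultrafilter a" and bu: "is_ultrafilter b" using ab LT TT_uf by blast+
    have "umult a b \<in> L" using LL ab LT unfolding lid_def by blast
    moreover have "Tp (umult a b) y = y" using Tp_mult[OF au bu y] ab by simp
    ultimately show "umult a b \<in> C" unfolding C_def by simp
  qed
  then obtain u where "u \<in> C" "umult u u = u" using ellis[OF Cc Cne] by blast
  then show ?thesis unfolding C_def by auto
qed

lemma central_from:
  assumes x: "x \<in> topspace X" and y: "y \<in> topspace X" and U: "nbhd X U {y}"
    and pr: "F_proximal F X T x y" and ur: "F_unif_rec F X T y" and B: "B = {s. T s x \<in> U}"
  shows "F_central F B"
proof -
  obtain r where r: "r \<in> TT" "Tp r x = Tp r y" using proximal_point[OF x y pr] by blast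
  have ru: "is_ultrafilter r" using TT_uf[OF r(1)] .
  obtain L where L: "minlid L" "L \<subseteq> (\<lambda>p. umult p r) ` TT" using lid_contains_min[OF TTq_lid[OF r(1)]] by blast
  obtain u where u: "u \<in> L" "umult u u = u" "Tp u y = y" using idem_min[OF y ur L(1)] by blast
  obtain v where v: "v \<in> TT" "u = umult v r" using L(2) u(1) by blast
  have vu: "is_ultrafilter v" using TT_uf[OF v(1)] .
  have uu: "is_ultrafilter u" using v umult_uf[OF vu ru] by simp
  have "Tp u x = Tp v (Tp r x)" using Tp_mult[OF vu ru x] v(2) by simp
  also have "\<dots> = Tp v (Tp r y)" using r(2) by simp
  also have "\<dots> = Tp u y" using Tp_mult[OF vu ru y] v(2) by simp
  also have "\<dots> = y" using u(3) .
  finally have ux: "Tp u x = y" .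
  obtain V where V: "openin X V" "{y} \<subseteq> V" "V \<subseteq> U" using U by (rule nbhd_open)
  have S: "{s. T s x \<in> V} \<in> u" using Tp_open[OF uu x V(1)] V(2) ux by simp
  have "{s. T s x \<in> V} \<subseteq> B" unfolding B using V(3) by blast
  then have "B \<in> u" by (rule uf_mono[OF uu S])
  moreover have "u \<in> K_beta TT" using minlid_sub_K[OF L(1)] u(1) by blast
  ultimately show ?thesis unfolding F_central_def using u(2) by blast
qed

end

definition Tsh :: "'s::semigroup_mult \<Rightarrow> 's set set \<Rightarrow> 's set set" where
  "Tsh s \<A> = {A. (A = {} \<and> {s} \<in> \<A>) \<or> (\<exists>t. A = {t} \<and> {t * s} \<in> \<A>)}"

lemma Tsh_empty [simp]: "{} \<in> Tsh s \<A> \<longleftrightarrow> {s} \<in> \<A>"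
  unfolding Tsh_def by auto

lemma Tsh_single [simp]: "{t} \<in> Tsh s \<A> \<longleftrightarrow> {t * s} \<in> \<A>"
  unfolding Tsh_def by auto

lemma Tsh_other: "A \<noteq> {} \<Longrightarrow> (\<forall>t. A \<noteq> {t}) \<Longrightarrow> A \<notin> Tsh s \<A>"
  unfolding Tsh_def by auto

lemma Tsh_comp: "Tsh s (Tsh r \<A>) = Tsh (s * r) \<A>"
proof (rule set_eqI)
  fix A
  show "A \<in> Tsh s (Tsh r \<A>) \<longleftrightarrow> A \<in> Tsh (s * r) \<A>"
  proof (cases "A = {}")
    case True then show ?thesis by simp
  next
    case False
    show ?thesis
    proof (cases "\<exists>t. A = {t}")
      case True
      then obtain t where "A = {t}" by blast
      then show ?thesis by (simp add: mult.assoc)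
    next
      case False
      then show ?thesis using Tsh_other \<open>A \<noteq> {}\<close> by blast
    qed
  qed
qed

lemma Tsh_cont: "continuous_map PP PP (Tsh s)"
proof (rule into_PP)
  fix A :: "'a set"
  show "continuous_map PP (discrete_topology UNIV) (\<lambda>y. A \<in> Tsh s y)"
  proof (cases "A = {}")
    case True
    then have "(\<lambda>y. A \<in> Tsh s y) = (\<lambda>y. {s} \<in> y)" by simp
    then show ?thesis using coord_cont by simp
  next
    case False
    show ?thesis
    proof (cases "\<exists>t. A = {t}")
      case True
      then obtain t where t: "A = {t}" by blast
      then have "(\<lambda>y. A \<in> Tsh s y) = (\<lambda>y. {t * s} \<in> y)" by simp
      then show ?thesis using coord_cont by simp
    next
      case nt: False
      then have "(\<lambda>y. A \<in> Tsh s y) = (\<lambda>y. False)" using Tsh_other False by blast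
      then show ?thesis by simp
    qed
  qed
qed

lemma dyn_Tsh: "dyn_system (PP :: 's::semigroup_mult set set topology) Tsh"
  unfolding dyn_system_def using compact_PP Hausdorff_PP Tsh_cont Tsh_comp by blast

theorem theorem5:
  fixes F :: "'s::semigroup_mult set set" and B :: "'s set"
  assumes "is_filter_on F" and "subsemigroup_beta (Fbar F)"
  shows "(F_central F B \<longrightarrow>
           (\<exists>(X :: 's set set topology) T x y U.
              dyn_system X T \<and> x \<in> topspace X \<and> y \<in> topspace X \<and> nbhd X U {y}
              \<and> F_proximal F X T x y \<and> F_unif_rec F X T y \<and> B = {s. T s x \<in> U}))
       \<and> (\<forall>(X :: 'x topology) T x y U.
              dyn_system X T \<and> x \<in> topspace X \<and> y \<in> topspace X \<and> nbhd X U {y}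
              \<and> F_proximal F X T x y \<and> F_unif_rec F X T y \<and> B = {s. T s x \<in> U}
              \<longrightarrow> F_central F B)"
proof (intro conjI impI allI)
  interpret fsemi F using assms by unfold_locales
  {
    assume "F_central F B"
    then obtain p where p: "p \<in> K_beta (Fbar F)" "umult p p = p" "B \<in> p"
      unfolding F_central_def by blast
    interpret D: dynF F PP Tsh by unfold_locales (rule dyn_Tsh)
    have pT: "p \<in> Fbar F" using p(1) K_sub by blast
    have pu: "is_ultrafilter p" using TT_uf[OF pT] .
    define x0 :: "'s set set" where "x0 = {{b} | b. b \<in> B}"
    define y where "y = D.Tp p x0"
    define U :: "'s set set set" where "U = {\<A>. {} \<in> \<A>}"
    have x0B: "\<And>s. {s} \<in> x0 \<longleftrightarrow> s \<in> B" unfolding x0_def by auto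
    have py: "D.Tp p y = y" unfolding y_def using D.Tp_mult[OF pu pu] p(2) by simp
    have yU: "y \<in> U"
    proof (rule ccontr)
      assume "y \<notin> U"
      then have "y \<in> {\<A>. \<not> ({} \<in> \<A>)}" unfolding U_def by simp
      then have "{s. Tsh s x0 \<in> {\<A>. \<not> ({} \<in> \<A>)}} \<in> p"
        using D.Tp_open[OF pu _ coord_open[of Not "{}"]] unfolding y_def by simp
      moreover have "{s. Tsh s x0 \<in> {\<A>. \<not> ({} \<in> \<A>)}} = - B" using x0B by auto
      ultimately show False using p(3) uf_compl_iff[OF pu] by simp
    qed
    have Uo: "openin PP U" unfolding U_def using coord_open[of "\<lambda>b. b" "{}"] by simp
    have nb: "nbhd PP U {y}" unfolding nbhd_def using Uo yU by auto
    have BU: "B = {s. Tsh s x0 \<in> U}" unfolding U_def using x0B by auto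
    have pr: "F_proximal F PP Tsh x0 y" by (rule D.prox_from[OF pT _ _ _ py]) (simp_all add: y_def)
    have ur: "F_unif_rec F PP Tsh y" by (rule D.unifrec_from[OF p(1) _ py]) simp
    show "\<exists>(X :: 's set set topology) T x y U.
              dyn_system X T \<and> x \<in> topspace X \<and> y \<in> topspace X \<and> nbhd X U {y}
              \<and> F_proximal F X T x y \<and> F_unif_rec F X T y \<and> B = {s. T s x \<in> U}"
      using dyn_Tsh nb pr ur BU by force
  }
  fix X :: "'x topology" and T x y U
  assume h: "dyn_system X T \<and> x \<in> topspace X \<and> y \<in> topspace X \<and> nbhd X U {y}
              \<and> F_proximal F X T x y \<and> F_unif_rec F X T y \<and> B = {s. T s x \<in> U}"
  interpret D2: dynF F X T using h by unfold_locales blast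
  show "F_central F B" using D2.central_from h by blast
qed

end
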